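(* Let $A$ be an $n$-by-$n$ doubly nonnegative matrix, written as $A=UDU^T$ with $U=[u_{ij}]$ real orthogonal and $D=\mathrm{diag}(\lambda_1,\dots,\lambda_n)$, $\lambda_1\ge\lambda_2\ge\cdots\ge\lambda_n\ge 0$, and let $W=[w_{ij}]$ be the corresponding sign change matrix. Then every diagonal entry of $W$ is zero, every row and every column of $W$ contains at most one entry equal to $n-1$, and all remaining entries of $W$ are at most $n-2$.
   Context: A real matrix is doubly nonnegative if it is symmetric, positive semidefinite, and entry-wise nonnegative. With $A=UDU^T$ as in the claim and $t>0$, $A^t=UD^tU^T$, so $(A^t)_{ij}=u_{i1}u_{j1}\lambda_1^t+\cdots+u_{in}u_{jn}\lambda_n^t$, an exponential polynomial in $t$. The sign change matrix $W=[w_{ij}]$ is defined by letting $w_{ij}$ be the number of sign changes in the sequence of coefficients $(u_{i1}u_{j1},u_{i2}u_{j2},\dots,u_{in}u_{jn})$ of this exponential polynomial, arranged in decreasing order of the corresponding eigenvalues (zero coefficients being ignored when counting sign changes). *)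

theory Defs
  imports "Jordan_Normal_Form.Matrix"
begin

definition doubly_nonnegative :: "nat \<Rightarrow> real mat \<Rightarrow> bool" where
  "doubly_nonnegative n A \<longleftrightarrow>
     A \<in> carrier_mat n n \<and>
     transpose_mat A = A \<and>
     (\<forall>x \<in> carrier_vec n. 0 \<le> x \<bullet> (A *\<^sub>v x)) \<and>
     (\<forall>i<n. \<forall>j<n. 0 \<le> A $$ (i, j))"

fun sign_changes_nz :: "real list \<Rightarrow> nat" where
  "sign_changes_nz (x # y # zs) = (if x * y < 0 then 1 else 0) + sign_changes_nz (y # zs)"
| "sign_changes_nz _ = 0"

definition sign_changes :: "real list \<Rightarrow> nat" where
  "sign_changes xs = sign_changes_nz (filter (\<lambda>x. x \<noteq> 0) xs)"

text \<open>Sign change matrix (0-based indices): entry (i,j) is the number of sign changes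
  in the coefficient sequence (u_{i0} u_{j0}, ..., u_{i,n-1} u_{j,n-1}), where the columns
  of U are ordered by decreasing eigenvalue.\<close>
definition sign_change_entry :: "nat \<Rightarrow> real mat \<Rightarrow> nat \<Rightarrow> nat \<Rightarrow> nat" where
  "sign_change_entry n U i j = sign_changes (map (\<lambda>k. U $$ (i, k) * U $$ (j, k)) [0..<n])"

end

theory Submission
  imports Defs "Jordan_Normal_Form.Determinant"
begin

lemma sc_le: "sign_changes_nz xs \<le> length xs - 1"
  by (induction xs rule: sign_changes_nz.induct) auto

lemma sc_full: "sign_changes_nz xs = length xs - 1 \<Longrightarrow> k + 1 < length xs \<Longrightarrow> xs!k * xs!(k+1) < 0"
proof (induction xs arbitrary: k rule: sign_changes_nz.induct)
  case (1 x y zs)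
  have le: "sign_changes_nz (y # zs) \<le> length (y # zs) - 1" by (rule sc_le)
  have neg: "x * y < 0" and rest: "sign_changes_nz (y # zs) = length (y # zs) - 1"
    using 1(2) le by (auto split: if_splits)
  show ?case
  proof (cases k)
    case 0 then show ?thesis using neg by simp
  next
    case (Suc k') then show ?thesis using 1(1)[OF rest, of k'] 1(3) by simp
  qed
qed auto

lemma sc_le_len: "sign_changes (map p [0..<n]) \<le> n - 1"
proof -
  have "sign_changes (map p [0..<n]) \<le> length (filter (\<lambda>x. x \<noteq> 0) (map p [0..<n])) - 1"
    unfolding sign_changes_def by (rule sc_le)
  also have "\<dots> \<le> n - 1" using length_filter_le[of "\<lambda>x. x \<noteq> 0" "map p [0..<n]"] by simp
  finally show ?thesis .
qed

lemma sc_full2: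
  assumes "2 \<le> n" "sign_changes (map p [0..<n]) = n - 1"
  shows "(\<forall>k<n. p k \<noteq> 0) \<and> (\<forall>k. k + 1 < n \<longrightarrow> p k * p (Suc k) < 0)"
proof -
  let ?xs = "map p [0..<n]"
  let ?fs = "filter (\<lambda>x. x \<noteq> 0) ?xs"
  have nz: "\<forall>x\<in>set ?xs. x \<noteq> 0"
  proof (rule ccontr)
    assume "\<not> ?thesis"
    then have "length ?fs < length ?xs" by (intro length_filter_less) auto
    then have "length ?fs - 1 < n - 1" using assms(1) by simp
    moreover have "sign_changes ?xs \<le> length ?fs - 1" unfolding sign_changes_def by (rule sc_le)
    ultimately show False using assms(2) by simp
  qed
  then have fs: "?fs = ?xs" by (simp add: filter_id_conv)
  have full: "sign_changes_nz ?xs = length ?xs - 1" using assms(2) fs unfolding sign_changes_def by simp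
  show ?thesis
  proof (intro conjI allI impI)
    fix k assume "k < n" then show "p k \<noteq> 0" using nz by auto
  next
    fix k assume k: "k + 1 < n"
    have "?xs!k * ?xs!(k+1) < 0" by (rule sc_full[OF full]) (use k in simp)
    then show "p k * p (Suc k) < 0" using k by (simp del: upt_Suc)
  qed
qed

lemma two_full_false:
  fixes U :: "real mat"
  assumes U: "U \<in> carrier_mat n n" and UU: "U * transpose_mat U = 1\<^sub>m n"
    and n: "2 \<le> n" and ij: "i < n" "j < n" "j' < n" "j \<noteq> j'"
    and fj: "sign_change_entry n U i j = n - 1" and fj': "sign_change_entry n U i j' = n - 1"
  shows False
proof -
  define p where "p k = U $$ (i, k) * U $$ (j, k)" for k
  define q where "q k = U $$ (i, k) * U $$ (j', k)" for k
  define r where "r k = U $$ (j, k) * U $$ (j', k)" for k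
  have "sign_changes (map p [0..<n]) = n - 1" using fj unfolding sign_change_entry_def p_def[abs_def] .
  from sc_full2[OF n this] have P: "(\<forall>k<n. p k \<noteq> 0) \<and> (\<forall>k. k + 1 < n \<longrightarrow> p k * p (Suc k) < 0)" .
  have "sign_changes (map q [0..<n]) = n - 1" using fj' unfolding sign_change_entry_def q_def[abs_def] .
  from sc_full2[OF n this] have Q: "(\<forall>k<n. q k \<noteq> 0) \<and> (\<forall>k. k + 1 < n \<longrightarrow> q k * q (Suc k) < 0)" .
  have step: "r k * r (Suc k) > 0" if k: "k + 1 < n" for k
  proof -
    have a: "p k * p (Suc k) < 0" "q k * q (Suc k) < 0" using P Q k by auto
    have "(p k * p (Suc k)) * (q k * q (Suc k)) > 0" using a by (simp add: mult_neg_neg)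
    moreover have "(p k * p (Suc k)) * (q k * q (Suc k)) =
       ((U $$ (i, k))^2 * (U $$ (i, Suc k))^2) * (r k * r (Suc k))"
      unfolding p_def q_def r_def by (simp add: power2_eq_square algebra_simps)
    moreover have "(U $$ (i, k))^2 * (U $$ (i, Suc k))^2 \<ge> 0" by simp
    ultimately have "0 < ((U $$ (i, k))^2 * (U $$ (i, Suc k))^2) * (r k * r (Suc k))"
      "0 \<le> (U $$ (i, k))^2 * (U $$ (i, Suc k))^2" by simp_all
    then show ?thesis unfolding zero_less_mult_iff[of "(U $$ (i, k))^2 * (U $$ (i, Suc k))^2"] by linarith
  qed
  have r0: "r 0 \<noteq> 0" using P Q n unfolding p_def q_def r_def by auto
  have all: "k < n \<Longrightarrow> r 0 * r k > 0" for k
  proof (induction k)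
    case 0 then show ?case using r0 by (auto simp add: zero_less_mult_iff linorder_neq_iff)
  next
    case (Suc k)
    then have a: "r 0 * r k > 0" and b: "r k * r (Suc k) > 0" using step by auto
    then show ?case by (auto simp: zero_less_mult_iff)
  qed
  have "(\<Sum>k<n. r 0 * r k) > 0" using all n by (intro sum_pos) (auto simp: lessThan_empty_iff)
  moreover have "(\<Sum>k<n. r k) = 0"
  proof -
    have "(U * transpose_mat U) $$ (j, j') = 0" using UU ij by simp
    moreover have "(U * transpose_mat U) $$ (j, j') = (\<Sum>k<n. r k)"
      using U ij unfolding r_def by (simp add: scalar_prod_def lessThan_atLeast0)
    ultimately show ?thesis by simp
  qed
  ultimately show False by (simp add: sum_distrib_left[symmetric])
qed

theorem lemma2p3:
  fixes n :: nat and A U :: "real mat" and lam :: "nat \<Rightarrow> real"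
  assumes "doubly_nonnegative n A"
    and "U \<in> carrier_mat n n"
    and "transpose_mat U * U = 1\<^sub>m n"
    and "\<And>k l. k \<le> l \<Longrightarrow> l < n \<Longrightarrow> lam l \<le> lam k"
    and "\<And>k. k < n \<Longrightarrow> 0 \<le> lam k"
    and "A = U * mat_diag n lam * transpose_mat U"
  defines "w \<equiv> sign_change_entry n U"
  shows "(\<forall>i<n. w i i = 0)
    \<and> (\<forall>i<n. card {j. j < n \<and> w i j = n - 1} \<le> 1)
    \<and> (\<forall>j<n. card {i. i < n \<and> w i j = n - 1} \<le> 1)
    \<and> (\<forall>i<n. \<forall>j<n. w i j \<noteq> n - 1 \<longrightarrow> w i j \<le> n - 2)"
proof -
  have UU: "U * transpose_mat U = 1\<^sub>m n"
    by (rule mat_mult_left_right_inverse[OF _ assms(2) assms(3)]) (use assms(2) in simp)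
  have sym: "w i j = w j i" for i j
    unfolding w_def sign_change_entry_def by (simp add: mult.commute)
  have diag: "w i i = 0" for i
  proof -
    have nn: "\<forall>x\<in>set xs. x \<ge> 0 \<Longrightarrow> sign_changes_nz xs = 0" for xs :: "real list"
      by (induction xs rule: sign_changes_nz.induct) (auto simp: zero_le_mult_iff not_less)
    have "\<forall>x\<in>set (filter (\<lambda>x. x \<noteq> 0) (map (\<lambda>k. U $$ (i, k) * U $$ (i, k)) [0..<n])). x \<ge> 0"
      by auto
    from nn[OF this] show ?thesis unfolding w_def sign_change_entry_def sign_changes_def .
  qed
  have row: "card {j. j < n \<and> w i j = n - 1} \<le> 1" if i: "i < n" for i
  proof -
    have fin: "finite {j. j < n \<and> w i j = n - 1}" by simp
    have all: "\<forall>a\<in>{j. j < n \<and> w i j = n - 1}. \<forall>b\<in>{j. j < n \<and> w i j = n - 1}. a = b"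
    proof (intro ballI, rule ccontr)
      fix a b assume a: "a \<in> {j. j < n \<and> w i j = n - 1}" and b: "b \<in> {j. j < n \<and> w i j = n - 1}"
        and ab: "a \<noteq> b"
      from a have ha: "a < n" and wa: "w i a = n - 1" by simp_all
      from b have hb: "b < n" and wb: "w i b = n - 1" by simp_all
      from ha hb ab have n2: "2 \<le> n" by arith
      show False by (rule two_full_false[OF assms(2) UU n2 i ha hb ab wa[unfolded w_def] wb[unfolded w_def]])
    qed
    have "card {j. j < n \<and> w i j = n - 1} \<le> Suc 0" using card_le_Suc0_iff_eq[OF fin] all by blast
    then show ?thesis by simp
  qed
  have le: "w i j \<le> n - 1" for i j unfolding w_def sign_change_entry_def by (rule sc_le_len)
  show ?thesis
  proof (intro conjI allI impI)
    fix i show "w i i = 0" by (rule diag)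
  next
    fix i assume "i < n" then show "card {j. j < n \<and> w i j = n - 1} \<le> 1" by (rule row)
  next
    fix j assume "j < n" show "card {i. i < n \<and> w i j = n - 1} \<le> 1"
    proof -
      have "{i. i < n \<and> w i j = n - 1} = {i. i < n \<and> w j i = n - 1}" using sym by auto
      with row[OF \<open>j < n\<close>] show ?thesis by (simp only:)
    qed
  next
    fix i j assume "i < n" "j < n" "w i j \<noteq> n - 1" then show "w i j \<le> n - 2"
      using le[of i j] by arith
  qed
qed

end
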